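(* Let $a,b$ be non-negative integers with $a+b \ge 1$, and let $H_{a,b}$ be the graph defined in the context. Then \[ \lambda_3(H_{a,b}) = a+b-1 = \frac{|V(H_{a,b})|}{3}-1, \] and \[ \lim_{t \to \infty} \frac{\lambda_3\big(H_{a,b}^{[t]}\big)}{3(a+b)t} = \frac13 . \]
   Context: $\lambda_k(G)$ denotes the $k$-th largest eigenvalue (with multiplicity) of the adjacency matrix of a graph $G$. Let $v_1,\dots,v_6$ be the vertices of the 6-cycle $C_6$ in cyclic order. $H_{a,b}$ (the closed vertex multiplication of $C_6$ by $[a,b,a,b,a,b]$) is the graph obtained by replacing $v_i$ by a clique of size $a$ if $i$ is odd and of size $b$ if $i$ is even, and, for each edge $v_iv_{i+1}$ of $C_6$ (indices mod 6), joining every vertex of the clique of $v_i$ to every vertex of the clique of $v_{i+1}$; there are no other edges. Thus $|V(H_{a,b})| = 3(a+b)$. For a graph $H$ and a positive integer $t$, the closed blow-up $H^{[t]}$ is obtained by replacing each vertex of $H$ by a clique $K_t$ and each edge of $H$ by a complete bipartite graph $K_{t,t}$ between the corresponding cliques (non-adjacent vertices of $H$ give no edges). *)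

theory Defs
  imports Complex_Main "Jordan_Normal_Form.Char_Poly"
begin

text \<open>A finite simple graph is given by a duplicate-free list of its vertices
  (which fixes an ordering used to build the adjacency matrix) and a symmetric,
  irreflexive adjacency relation.\<close>

definition adj_matrix :: "'v list \<Rightarrow> ('v \<Rightarrow> 'v \<Rightarrow> bool) \<Rightarrow> real mat" where
  "adj_matrix vs E = mat (length vs) (length vs)
     (\<lambda>(i, j). if E (vs ! i) (vs ! j) then 1 else 0)"

text \<open>Eigenvalues of the (real symmetric) adjacency matrix, with multiplicity, in
  non-increasing order: the roots of the characteristic polynomial (all real).\<close>

definition eigenvalues_desc :: "'v list \<Rightarrow> ('v \<Rightarrow> 'v \<Rightarrow> bool) \<Rightarrow> real list" where
  "eigenvalues_desc vs E = rev (sorted_list_of_multiset (proots (char_poly (adj_matrix vs E))))"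

definition graph_lambda :: "nat \<Rightarrow> 'v list \<Rightarrow> ('v \<Rightarrow> 'v \<Rightarrow> bool) \<Rightarrow> real" where
  "graph_lambda k vs E = eigenvalues_desc vs E ! (k - 1)"

text \<open>The graph \<open>H_{a,b}\<close>: vertex \<open>(i, j)\<close> is the \<open>j\<close>-th vertex of the clique
  replacing \<open>v_{i+1}\<close> of \<open>C_6\<close> (\<open>i = 0..5\<close>); cliques at \<open>v_1, v_3, v_5\<close> (i even)
  have size \<open>a\<close>, the others size \<open>b\<close>.\<close>

definition H_size :: "nat \<Rightarrow> nat \<Rightarrow> nat \<Rightarrow> nat" where
  "H_size a b i = (if even i then a else b)"

definition H_verts :: "nat \<Rightarrow> nat \<Rightarrow> (nat \<times> nat) list" where
  "H_verts a b = concat (map (\<lambda>i. map (\<lambda>j. (i, j)) [0..<H_size a b i]) [0..<6])"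

definition H_adj :: "nat \<times> nat \<Rightarrow> nat \<times> nat \<Rightarrow> bool" where
  "H_adj u w \<longleftrightarrow> u \<noteq> w \<and>
     (fst u = fst w \<or> fst w = (fst u + 1) mod 6 \<or> fst u = (fst w + 1) mod 6)"

text \<open>Closed blow-up \<open>H^{[t]}\<close>: each vertex replaced by \<open>K_t\<close>, each edge by \<open>K_{t,t}\<close>.\<close>

definition blowup_verts :: "'v list \<Rightarrow> nat \<Rightarrow> ('v \<times> nat) list" where
  "blowup_verts vs t = concat (map (\<lambda>v. map (\<lambda>s. (v, s)) [0..<t]) vs)"

definition blowup_adj :: "('v \<Rightarrow> 'v \<Rightarrow> bool) \<Rightarrow> 'v \<times> nat \<Rightarrow> 'v \<times> nat \<Rightarrow> bool" where
  "blowup_adj E x y \<longleftrightarrow> x \<noteq> y \<and> (fst x = fst y \<or> E (fst x) (fst y))"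

end

theory Submission
  imports Defs
begin

lemma sylvester_det:
  fixes U V :: "'a::idom mat" and x :: 'a
  assumes U: "U \<in> carrier_mat n m" and V: "V \<in> carrier_mat m n"
  shows "x^m * det (x \<cdot>\<^sub>m 1\<^sub>m n - U * V) = x^n * det (x \<cdot>\<^sub>m 1\<^sub>m m - V * U)"
proof -
  define M where "M = four_block_mat (x \<cdot>\<^sub>m 1\<^sub>m n) U V (1\<^sub>m m)"
  define L1 where "L1 = four_block_mat (1\<^sub>m n) (-U) (0\<^sub>m m n) (1\<^sub>m m)"
  define L2 where "L2 = four_block_mat (1\<^sub>m n) (0\<^sub>m n m) (-V) (x \<cdot>\<^sub>m 1\<^sub>m m)"
  have UV: "U * V \<in> carrier_mat n n" "V * U \<in> carrier_mat m m" using U V by auto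
  have M: "M \<in> carrier_mat (n+m) (n+m)" unfolding M_def using U V by auto
  have L1: "L1 \<in> carrier_mat (n+m) (n+m)" unfolding L1_def using U V by auto
  have L2: "L2 \<in> carrier_mat (n+m) (n+m)" unfolding L2_def using U V by auto
  have e1: "L1 * M = four_block_mat (x \<cdot>\<^sub>m 1\<^sub>m n - U * V) (0\<^sub>m n m) V (1\<^sub>m m)"
  proof -
    have "L1 * M = four_block_mat (1\<^sub>m n * (x \<cdot>\<^sub>m 1\<^sub>m n) + - U * V) (1\<^sub>m n * U + - U * 1\<^sub>m m)
       (0\<^sub>m m n * (x \<cdot>\<^sub>m 1\<^sub>m n) + 1\<^sub>m m * V) (0\<^sub>m m n * U + 1\<^sub>m m * 1\<^sub>m m)"
      unfolding L1_def M_def by (rule mult_four_block_mat) (use U V in auto)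
    also have "\<dots> = four_block_mat (x \<cdot>\<^sub>m 1\<^sub>m n - U * V) (0\<^sub>m n m) V (1\<^sub>m m)"
    proof (rule cong_four_block_mat)
      show "1\<^sub>m n * (x \<cdot>\<^sub>m 1\<^sub>m n) + - U * V = x \<cdot>\<^sub>m 1\<^sub>m n - U * V"
        using U V by (simp add: add_uminus_minus_mat[of "x \<cdot>\<^sub>m 1\<^sub>m n" n n "U*V"])
      show "1\<^sub>m n * U + - U * 1\<^sub>m m = 0\<^sub>m n m" using U by (simp add: add_uminus_minus_mat[of U n m U])
      show "0\<^sub>m m n * (x \<cdot>\<^sub>m 1\<^sub>m n) + 1\<^sub>m m * V = V" using V by simp
      show "0\<^sub>m m n * U + 1\<^sub>m m * 1\<^sub>m m = 1\<^sub>m m" using U by simp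
    qed
    finally show ?thesis .
  qed
  have e2: "L2 * M = four_block_mat (x \<cdot>\<^sub>m 1\<^sub>m n) U (0\<^sub>m m n) (x \<cdot>\<^sub>m 1\<^sub>m m - V * U)"
  proof -
    have "L2 * M = four_block_mat (1\<^sub>m n * (x \<cdot>\<^sub>m 1\<^sub>m n) + 0\<^sub>m n m * V) (1\<^sub>m n * U + 0\<^sub>m n m * 1\<^sub>m m)
       (- V * (x \<cdot>\<^sub>m 1\<^sub>m n) + (x \<cdot>\<^sub>m 1\<^sub>m m) * V) (- V * U + (x \<cdot>\<^sub>m 1\<^sub>m m) * 1\<^sub>m m)"
      unfolding L2_def M_def by (rule mult_four_block_mat) (use U V in auto)
    also have "\<dots> = four_block_mat (x \<cdot>\<^sub>m 1\<^sub>m n) U (0\<^sub>m m n) (x \<cdot>\<^sub>m 1\<^sub>m m - V * U)"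
    proof (rule cong_four_block_mat)
      show "1\<^sub>m n * (x \<cdot>\<^sub>m 1\<^sub>m n) + 0\<^sub>m n m * V = x \<cdot>\<^sub>m 1\<^sub>m n" using V by simp
      show "1\<^sub>m n * U + 0\<^sub>m n m * 1\<^sub>m m = U" using U by simp
      show "- V * (x \<cdot>\<^sub>m 1\<^sub>m n) + x \<cdot>\<^sub>m 1\<^sub>m m * V = 0\<^sub>m m n" using V by (simp add: mult_smult_distrib[OF V one_carrier_mat] mult_smult_assoc_mat[OF one_carrier_mat V])
      show "- V * U + x \<cdot>\<^sub>m 1\<^sub>m m * 1\<^sub>m m = x \<cdot>\<^sub>m 1\<^sub>m m - V * U" using U V by (simp add: comm_add_mat[of "- (V*U)" m m] add_uminus_minus_mat[of "x \<cdot>\<^sub>m 1\<^sub>m m" m m "V*U"])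
    qed
    finally show ?thesis .
  qed
  have d1: "det L1 = 1" unfolding L1_def
    by (subst det_four_block_mat_lower_left_zero[where n=n and m=m]) (use U in auto)
  have d2: "det L2 = x^m" unfolding L2_def
    by (subst det_four_block_mat_upper_right_zero[where n=n and m=m]) (use V in auto)
  have "det M = det (x \<cdot>\<^sub>m 1\<^sub>m n - U * V)"
  proof -
    have "det (L1 * M) = det (x \<cdot>\<^sub>m 1\<^sub>m n - U * V)" unfolding e1
      by (subst det_four_block_mat_upper_right_zero[where n=n and m=m]) (use U V in auto)
    then show ?thesis using det_mult[OF L1 M] d1 by simp
  qed
  moreover have "x^m * det M = x^n * det (x \<cdot>\<^sub>m 1\<^sub>m m - V * U)"
  proof -
    have "det (L2 * M) = x^n * det (x \<cdot>\<^sub>m 1\<^sub>m m - V * U)" unfolding e2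
      by (subst det_four_block_mat_lower_left_zero[where n=n and m=m]) (use U V in auto)
    then show ?thesis using det_mult[OF L2 M] d2 by simp
  qed
  ultimately show ?thesis by simp
qed

definition clC6 :: "nat \<Rightarrow> nat \<Rightarrow> bool" where
  "clC6 c d \<longleftrightarrow> c = d \<or> d = (c+1) mod 6 \<or> c = (d+1) mod 6"

definition fU :: "nat \<Rightarrow> nat \<Rightarrow> real" where
  "fU k c = [[1,0,1,0,1,0],[0,1,0,1,0,1],[1,1,0,-1,-1,0],[0,1,1,0,-1,-1]] ! k ! c"

definition gV :: "nat \<Rightarrow> nat \<Rightarrow> real" where
  "gV k c = [[1/3,2/3,1/3,2/3,1/3,2/3],[2/3,1/3,2/3,1/3,2/3,1/3],
             [2/3,1/3,-1/3,-2/3,-1/3,1/3],[-1/3,1/3,2/3,1/3,-1/3,-2/3]] ! k ! c"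

lemma lessThan6: "{..<6::nat} = {0,1,2,3,4,5}" by (auto simp: numeral_eq_Suc less_Suc_eq)
lemma lessThan4: "{..<4::nat} = {0,1,2,3}" by (auto simp: numeral_eq_Suc less_Suc_eq)

lemma sum4: "(\<Sum>c<4::nat. F c) = F 0 + F 1 + F 2 + F 3"
  by (simp add: numeral_eq_Suc)

lemma tableUV: assumes "c < 6" "d < 6"
  shows "(\<Sum>k<4. fU k c * gV k d) = (if clC6 c d then 1 else 0)"
proof -
  have "c = 0 \<or> c = 1 \<or> c = 2 \<or> c = 3 \<or> c = 4 \<or> c = 5"
       "d = 0 \<or> d = 1 \<or> d = 2 \<or> d = 3 \<or> d = 4 \<or> d = 5" using assms by auto
  then show ?thesis unfolding sum4
    by (elim disjE) (simp_all add: fU_def gV_def clC6_def)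
qed

definition Wm :: "real \<Rightarrow> real \<Rightarrow> nat \<Rightarrow> nat \<Rightarrow> real" where
  "Wm a b k l = [[a,2*b,0,0],[2*a,b,0,0],[0,0,a+b,0],[0,0,0,a+b]] ! k ! l"

lemma sum6: "(\<Sum>c<6::nat. F c) = F 0 + F 1 + F 2 + F 3 + F 4 + F 5"
  by (simp add: numeral_eq_Suc)

lemma tableVU: assumes "k < 4" "l < 4"
  shows "(\<Sum>c<6. (if even c then a else b) * (gV k c * fU l c)) = Wm a b k l"
proof -
  have "k = 0 \<or> k = 1 \<or> k = 2 \<or> k = 3" "l = 0 \<or> l = 1 \<or> l = 2 \<or> l = 3" using assms by auto
  then show ?thesis unfolding sum6
    by (elim disjE) (simp_all add: fU_def gV_def Wm_def)
qed

lemma sum_by_class: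
  fixes h :: "nat \<Rightarrow> real"
  assumes "\<forall>v\<in>set vs. cl v < (6::nat)"
  shows "(\<Sum>j<length vs. h (cl (vs!j))) = (\<Sum>c<6. real (length (filter (\<lambda>v. cl v = c) vs)) * h c)"
proof -
  have "(\<Sum>j<length vs. h (cl (vs!j))) = sum_list (map (\<lambda>v. h (cl v)) vs)"
    by (simp add: sum_list_sum_nth atLeast0LessThan)
  also have "\<dots> = (\<Sum>c<6. real (length (filter (\<lambda>v. cl v = c) vs)) * h c)"
    using assms
  proof (induction vs)
    case Nil then show ?case by simp
  next
    case (Cons v vs)
    have "(\<Sum>c<6. real (length (filter (\<lambda>w. cl w = c) (v#vs))) * h c)
        = (\<Sum>c<6. (if cl v = c then h c else 0)) + (\<Sum>c<6. real (length (filter (\<lambda>w. cl w = c) vs)) * h c)"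
    proof -
      have "\<And>c. real (length (filter (\<lambda>w. cl w = c) (v#vs))) * h c
        = (if cl v = c then h c else 0) + real (length (filter (\<lambda>w. cl w = c) vs)) * h c"
        by (cases "cl v = c") (simp_all add: distrib_right)
      then show ?thesis by (simp add: sum.distrib)
    qed
    also have "(\<Sum>c<6. (if cl v = c then h c else 0)) = h (cl v)"
      using Cons.prems by (simp add: sum.delta)
    finally show ?case using Cons by simp
  qed
  finally show ?thesis .
qed



definition Umat :: "('v \<Rightarrow> nat) \<Rightarrow> 'v list \<Rightarrow> real mat" where
  "Umat cl vs = mat (length vs) 4 (\<lambda>(i,k). fU k (cl (vs!i)))"
definition Vmat :: "('v \<Rightarrow> nat) \<Rightarrow> 'v list \<Rightarrow> real mat" where
  "Vmat cl vs = mat 4 (length vs) (\<lambda>(k,j). gV k (cl (vs!j)))"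

lemma Umat_carrier: "Umat cl vs \<in> carrier_mat (length vs) 4" by (simp add: Umat_def)
lemma Vmat_carrier: "Vmat cl vs \<in> carrier_mat 4 (length vs)" by (simp add: Vmat_def)

lemma adj_eq_UV:
  assumes dist: "distinct vs" and cl6: "\<forall>v\<in>set vs. cl v < 6"
  and E: "\<forall>u w. E u w \<longleftrightarrow> u \<noteq> w \<and> clC6 (cl u) (cl w)"
  shows "adj_matrix vs E = Umat cl vs * Vmat cl vs - 1\<^sub>m (length vs)"
proof (rule eq_matI)
  fix i j assume i: "i < dim_row (Umat cl vs * Vmat cl vs - 1\<^sub>m (length vs))"
    and j: "j < dim_col (Umat cl vs * Vmat cl vs - 1\<^sub>m (length vs))"
  then have i': "i < length vs" and j': "j < length vs" by (auto simp: Umat_def Vmat_def)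
  have ci: "cl (vs!i) < 6" and cj: "cl (vs!j) < 6" using cl6 i' j' by auto
  have "(Umat cl vs * Vmat cl vs) $$ (i,j) = (\<Sum>k<4. fU k (cl (vs!i)) * gV k (cl (vs!j)))"
    using i' j' by (simp add: Umat_def Vmat_def scalar_prod_def atLeast0LessThan)
  also have "\<dots> = (if clC6 (cl (vs!i)) (cl (vs!j)) then 1 else 0)" by (rule tableUV[OF ci cj])
  finally have uv: "(Umat cl vs * Vmat cl vs) $$ (i,j) = (if clC6 (cl (vs!i)) (cl (vs!j)) then 1 else 0)" .
  have eq: "vs!i = vs!j \<longleftrightarrow> i = j" using dist i' j' by (simp add: nth_eq_iff_index_eq)
  show "adj_matrix vs E $$ (i, j) = (Umat cl vs * Vmat cl vs - 1\<^sub>m (length vs)) $$ (i, j)"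
    using i' j' uv eq E by (auto simp: adj_matrix_def Umat_def Vmat_def clC6_def)
qed (auto simp: adj_matrix_def Umat_def Vmat_def)

lemma VU_eq:
  assumes cl6: "\<forall>v\<in>set vs. cl v < 6"
  and cnt: "\<forall>c<6. length (filter (\<lambda>v. cl v = c) vs) = (if even c then na else nb)"
  shows "Vmat cl vs * Umat cl vs = mat 4 4 (\<lambda>(k,l). Wm (real na) (real nb) k l)"
proof (rule eq_matI)
  fix k l assume k: "k < dim_row (mat 4 4 (\<lambda>(k,l). Wm (real na) (real nb) k l))"
    and l: "l < dim_col (mat 4 4 (\<lambda>(k,l). Wm (real na) (real nb) k l))"
  then have k': "k < 4" and l': "l < 4" by auto
  have "(Vmat cl vs * Umat cl vs) $$ (k,l) = (\<Sum>j<length vs. gV k (cl (vs!j)) * fU l (cl (vs!j)))"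
    using k' l' by (simp add: Umat_def Vmat_def scalar_prod_def atLeast0LessThan)
  also have "\<dots> = (\<Sum>c<6. real (length (filter (\<lambda>v. cl v = c) vs)) * (gV k c * fU l c))"
    by (rule sum_by_class[OF cl6])
  also have "\<dots> = (\<Sum>c<6. (if even c then real na else real nb) * (gV k c * fU l c))"
    using cnt by (intro sum.cong) auto
  also have "\<dots> = Wm (real na) (real nb) k l" by (rule tableVU[OF k' l'])
  finally show "(Vmat cl vs * Umat cl vs) $$ (k,l) = mat 4 4 (\<lambda>(k,l). Wm (real na) (real nb) k l) $$ (k,l)"
    using k' l' by simp
qed (auto simp: Umat_def Vmat_def)

lemma char_poly_UV:
  fixes U V :: "real mat"
  assumes U: "U \<in> carrier_mat n m" and V: "V \<in> carrier_mat m n"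
  shows "[:1,1:]^m * char_poly (U * V - 1\<^sub>m n) = [:1,1:]^n * det ([:1,1:] \<cdot>\<^sub>m 1\<^sub>m m - map_mat (\<lambda>a. [:a:]) (V * U))"
proof -
  let ?U = "map_mat (\<lambda>a. [:a:]) U" and ?V = "map_mat (\<lambda>a. [:a:]) V"
  have U': "?U \<in> carrier_mat n m" and V': "?V \<in> carrier_mat m n" using U V by auto
  have "char_poly_matrix (U * V - 1\<^sub>m n) = [:1,1:] \<cdot>\<^sub>m 1\<^sub>m n - map_mat (\<lambda>a. [:a:]) (U * V)"
    unfolding char_poly_matrix_def
    by (rule eq_matI) (use U V in \<open>auto simp: one_pCons\<close>)
  then have "char_poly (U * V - 1\<^sub>m n) = det ([:1,1:] \<cdot>\<^sub>m 1\<^sub>m n - ?U * ?V)"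
    unfolding char_poly_def map_poly_mult(1)[OF U V] by simp
  moreover have "map_mat (\<lambda>a. [:a:]) (V * U) = ?V * ?U" by (rule map_poly_mult(1)[OF V U])
  ultimately show ?thesis using sylvester_det[OF U' V', of "[:1,1:]"] by simp
qed



lemma det2: assumes A: "(A :: 'a :: comm_ring_1 mat) \<in> carrier_mat 2 2"
  shows "det A = A $$ (0,0) * A $$ (1,1) - A $$ (0,1) * A $$ (1,0)"
proof -
  have "det A = (\<Sum>j<2. A $$ (0,j) * cofactor A 0 j)" by (rule laplace_expansion_row[OF A]) simp
  also have "\<dots> = A $$ (0,0) * cofactor A 0 0 + A $$ (0,1) * cofactor A 0 1"
    by (simp add: numeral_eq_Suc)
  also have "cofactor A 0 0 = A $$ (1,1)"
    unfolding cofactor_def using A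
    by (subst det_single) (auto simp: mat_delete_def)
  also have "cofactor A 0 1 = - A $$ (1,0)"
    unfolding cofactor_def using A
    by (subst det_single) (auto simp: mat_delete_def)
  finally show ?thesis by simp
qed

lemma det4:
  fixes a b :: real
  defines "y \<equiv> [:1,1:] :: real poly"
  shows "det (y \<cdot>\<^sub>m 1\<^sub>m 4 - map_mat (\<lambda>a. [:a:]) (mat 4 4 (\<lambda>(k,l). Wm a b k l)))
     = ((y - [:a:]) * (y - [:b:]) - [:4*a*b:]) * (y - [:a+b:])^2"
proof -
  let ?M = "y \<cdot>\<^sub>m 1\<^sub>m 4 - map_mat (\<lambda>a. [:a:]) (mat 4 4 (\<lambda>(k,l). Wm a b k l))"
  define P where "P = mat 2 2 (\<lambda>(i,j). ?M $$ (i,j))"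
  define Q where "Q = mat 2 2 (\<lambda>(i,j). ?M $$ (i+2,j+2))"
  have less4: "\<And>i. i < 4 \<Longrightarrow> i = 0 \<or> i = 1 \<or> i = 2 \<or> i = (3::nat)" by auto
  have "?M = four_block_mat P (0\<^sub>m 2 2) (0\<^sub>m 2 2) Q"
  proof (rule eq_matI)
    fix i j assume "i < dim_row (four_block_mat P (0\<^sub>m 2 2) (0\<^sub>m 2 2) Q)" "j < dim_col (four_block_mat P (0\<^sub>m 2 2) (0\<^sub>m 2 2) Q)"
    then have i4: "i < 4" and j4: "j < 4" by (auto simp: P_def Q_def)
    from less4[OF i4] less4[OF j4]
    show "?M $$ (i,j) = four_block_mat P (0\<^sub>m 2 2) (0\<^sub>m 2 2) Q $$ (i,j)"
      by (elim disjE) (simp_all add: P_def Q_def Wm_def four_block_mat_def)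
  qed (auto simp: P_def Q_def)
  then have "det ?M = det (four_block_mat P (0\<^sub>m 2 2) (0\<^sub>m 2 2) Q)" by simp
  also have "\<dots> = det P * det Q"
    by (rule det_four_block_mat_upper_right_zero[where n=2 and m=2]) (auto simp: P_def Q_def)
  also have "det P = (y - [:a:]) * (y - [:b:]) - [:4*a*b:]"
    by (subst det2) (auto simp: P_def Wm_def)
  also have "det Q = (y - [:a+b:])^2"
    by (subst det2) (auto simp: Q_def Wm_def power2_eq_square)
  finally show ?thesis .
qed



lemma third_largest:
  fixes v r :: real
  assumes P: "P = mset (Rl @ [v, v, r])" and le: "\<forall>x\<in>set Rl. x \<le> v" and vr: "v \<le> r"
  shows "rev (sorted_list_of_multiset P) ! 2 = v"
proof -
  have "sort (Rl @ [v, v, r]) = sort Rl @ [v, v, r]"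
  proof (rule properties_for_sort)
    show "mset (sort Rl @ [v, v, r]) = mset (Rl @ [v, v, r])" by simp
    show "sorted (sort Rl @ [v, v, r])" using le vr by (auto simp: sorted_append)
  qed
  then show ?thesis unfolding P sorted_list_of_multiset_mset by (simp add: nth_append)
qed

lemma quad_factor:
  fixes a b :: real
  assumes "a \<ge> 0" "b \<ge> 0"
  defines "d \<equiv> (a+b)^2 + 12*a*b"
  shows "([:1,1:] - [:a:]) * ([:1,1:] - [:b:]) - [:4*a*b:]
     = [:-((a+b + sqrt d)/2 - 1), 1:] * [:-((a+b - sqrt d)/2 - 1), 1:]"
proof -
  have d0: "d \<ge> 0" using assms by (simp add: d_def)
  have sq: "sqrt d * sqrt d = d" using d0 by simp
  show ?thesis
  proof (rule poly_eq_poly_eq_iff[THEN iffD1], rule ext)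
    fix x :: real
    show "poly (([:1,1:] - [:a:]) * ([:1,1:] - [:b:]) - [:4*a*b:]) x
      = poly ([:-((a+b + sqrt d)/2 - 1), 1:] * [:-((a+b - sqrt d)/2 - 1), 1:]) x"
      using sq unfolding d_def by (simp add: field_simps power2_eq_square)
  qed
qed

lemma lambda3_generic:
  fixes vs :: "'v list" and cl :: "'v \<Rightarrow> nat" and E :: "'v \<Rightarrow> 'v \<Rightarrow> bool"
  assumes dist: "distinct vs" and cl6: "\<forall>v\<in>set vs. cl v < 6"
  and cnt: "\<forall>c<6. length (filter (\<lambda>v. cl v = c) vs) = (if even c then na else nb)"
  and E: "\<forall>u w. E u w \<longleftrightarrow> u \<noteq> w \<and> clC6 (cl u) (cl w)"
  and s1: "na + nb \<ge> 1"
  shows "graph_lambda 3 vs E = real (na + nb) - 1"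
proof -
  let ?n = "length vs"
  have "real ?n = (\<Sum>j<?n. (\<lambda>c. 1::real) (cl (vs!j)))" by simp
  also have "\<dots> = (\<Sum>c<6. real (length (filter (\<lambda>v. cl v = c) vs)) * 1)"
    by (rule sum_by_class[OF cl6])
  also have "\<dots> = (\<Sum>c<(6::nat). (if even c then real na else real nb))"
    using cnt by (intro sum.cong) auto
  also have "\<dots> = 3 * real na + 3 * real nb" unfolding sum6 by simp
  finally have n: "?n = 3 * na + 3 * nb" by linarith
  define a where "a = real na"
  define b where "b = real nb"
  define s where "s = a + b"
  define d where "d = (a+b)^2 + 12*a*b"
  define r1 where "r1 = (a+b + sqrt d)/2 - 1"
  define r2 where "r2 = (a+b - sqrt d)/2 - 1"
  have a0: "a \<ge> 0" and b0: "b \<ge> 0" by (auto simp: a_def b_def)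
  have s1': "s \<ge> 1" using s1 by (simp add: s_def a_def b_def)
  have dge: "d \<ge> s^2" using a0 b0 by (simp add: d_def s_def)
  have sqd: "sqrt d \<ge> s" using dge s1' real_le_rsqrt by auto
  have r1ge: "r1 \<ge> s - 1" using sqd by (simp add: r1_def s_def)
  have r2le: "r2 \<le> -1" using sqd by (simp add: r2_def s_def)
  define cp where "cp = char_poly (adj_matrix vs E)"
  have A: "adj_matrix vs E = Umat cl vs * Vmat cl vs - 1\<^sub>m ?n"
    by (rule adj_eq_UV[OF dist cl6 E])
  have key: "[:1,1:]^4 * cp = [:1,1:]^?n * (([:-r1,1:] * [:-r2,1:]) * [:1-s,1:]^2)"
  proof -
    have "[:1,1:]^4 * cp = [:1,1:]^?n * det ([:1,1:] \<cdot>\<^sub>m 1\<^sub>m 4 - map_mat (\<lambda>a. [:a:]) (Vmat cl vs * Umat cl vs))"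
      unfolding cp_def A by (rule char_poly_UV[OF Umat_carrier Vmat_carrier])
    also have "Vmat cl vs * Umat cl vs = mat 4 4 (\<lambda>(k,l). Wm a b k l)"
      unfolding a_def b_def by (rule VU_eq[OF cl6 cnt])
    also have "det ([:1,1:] \<cdot>\<^sub>m 1\<^sub>m 4 - map_mat (\<lambda>a. [:a:]) (mat 4 4 (\<lambda>(k,l). Wm a b k l)))
       = (([:1,1:] - [:a:]) * ([:1,1:] - [:b:]) - [:4*a*b:]) * ([:1,1:] - [:a+b:])^2"
      by (rule det4)
    also have "([:1,1:] - [:a:]) * ([:1,1:] - [:b:]) - [:4*a*b:] = [:-r1,1:] * [:-r2,1:]"
      unfolding r1_def r2_def d_def by (rule quad_factor[OF a0 b0])
    also have "([:1,1:] - [:a+b:]) = [:1-s,1:]" by (simp add: s_def)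
    finally show ?thesis .
  qed
  have cp0: "cp \<noteq> 0"
  proof -
    have "adj_matrix vs E \<in> carrier_mat ?n ?n" by (simp add: adj_matrix_def)
    from degree_monic_char_poly[OF this] have "coeff cp ?n = 1" by (simp add: cp_def)
    then show ?thesis by auto
  qed
  have pk: "proots ([:1,1:]^4 * cp) = proots ([:1,1:]^?n * (([:-r1,1:] * [:-r2,1:]) * [:1-s,1:]^2))"
    using key by simp
  have ms: "replicate_mset 4 (-1) + proots cp = replicate_mset ?n (-1) + ({#r1#} + {#r2#} + replicate_mset 2 (s-1))"
  proof -
    have nz0: "[:1,1:]^4 \<noteq> (0::real poly)" "[:1,1:]^?n \<noteq> (0::real poly)"
      "[:1-s,1:]^2 \<noteq> 0" "[:-r1,1:] \<noteq> 0" "[:-r2,1:] \<noteq> 0"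
      by auto
    have nz1: "[:-r1,1:] * [:-r2,1:] \<noteq> 0" using nz0 by (metis mult_eq_0_iff)
    have nz2: "([:-r1,1:] * [:-r2,1:]) * [:1-s,1:]^2 \<noteq> 0" using nz0 nz1 by (metis mult_eq_0_iff)
    note nz = nz0 nz1 nz2
    have "proots ([:1,1:]^4 * cp) = repeat_mset 4 {#-1#} + proots cp"
      by (simp only: proots_mult nz cp0 proots_power proots_linear_factor simp_thms)
    moreover have "proots ([:1,1:]^?n * (([:-r1,1:] * [:-r2,1:]) * [:1-s,1:]^2))
       = repeat_mset ?n {#-1#} + (({#- (-r1)#} + {#- (-r2)#}) + repeat_mset 2 {#-(1-s)#})"
      by (simp only: proots_mult nz cp0 proots_power proots_linear_factor simp_thms)
    ultimately show ?thesis using pk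
      by (simp add: repeat_mset_replicate_mset)
  qed
  have P: "proots cp = mset (Rl @ [s-1, s-1, r1])" and Rl: "\<forall>x\<in>set Rl. x \<le> s-1"
    if "Rl = (if ?n \<ge> 4 then replicate (?n - 4) (-1) @ [r2] else [])" for Rl
  proof -
    show "\<forall>x\<in>set Rl. x \<le> s-1" using that r2le s1' by auto
    show "proots cp = mset (Rl @ [s-1, s-1, r1])"
    proof (cases "?n \<ge> 4")
      case True
      have "replicate_mset ?n (-1::real) = replicate_mset 4 (-1) + replicate_mset (?n - 4) (-1)"
        using True by (metis le_add_diff_inverse mset_replicate replicate_add mset_append)
      with ms have "proots cp = replicate_mset (?n - 4) (-1) + ({#r1#} + {#r2#} + replicate_mset 2 (s-1))"
        by (simp add: add.assoc)
      then show ?thesis using True that by (simp add: numeral_2_eq_2 add_ac)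
    next
      case False
      then have "na + nb = 1" using n s1 by auto
      then have "na * nb = 0" by (cases na) auto
      then have "a * b = 0" by (simp add: a_def b_def)
      moreover have "s = 1" using \<open>na + nb = 1\<close> by (simp add: s_def a_def b_def)
      ultimately have "r2 = -1" by (simp add: r2_def d_def s_def)
      have n3: "?n = 3" using n \<open>na + nb = 1\<close> by simp
      have "replicate_mset 4 (-1::real) = replicate_mset ?n (-1) + {#r2#}"
        using n3 \<open>r2 = -1\<close> by (simp add: numeral_eq_Suc)
      with ms have "proots cp = {#r1#} + replicate_mset 2 (s-1)"
        by (simp add: add_ac)
      then show ?thesis using False that by (simp add: numeral_2_eq_2 add_ac)
    qed
  qed
  have "graph_lambda 3 vs E = rev (sorted_list_of_multiset (proots cp)) ! 2"
    by (simp add: graph_lambda_def eigenvalues_desc_def cp_def)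
  also have "\<dots> = s - 1"
    by (rule third_largest[OF P[OF refl] Rl[OF refl] r1ge])
  finally show ?thesis by (simp add: s_def a_def b_def)
qed



lemma upt6: "[0..<6] = [0,1,2,3,4,5::nat]" by (simp add: upt_rec)

lemma H_verts_set: "set (H_verts a b) = {(i,j). i < 6 \<and> j < H_size a b i}"
  by (auto simp: H_verts_def)

lemma distinct_concat_pairs:
  assumes "distinct xs" "\<And>i. distinct (f i)"
  shows "distinct (concat (map (\<lambda>i. map (Pair i) (f i)) xs))"
  using assms by (induction xs) (auto simp: distinct_map inj_on_def)

lemma H_verts_distinct: "distinct (H_verts a b)"
  unfolding H_verts_def by (rule distinct_concat_pairs) auto

lemma H_verts_count: assumes "c < 6"
  shows "length (filter (\<lambda>v. fst v = c) (H_verts a b)) = (if even c then a else b)"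
proof -
  have "c = 0 \<or> c = 1 \<or> c = 2 \<or> c = 3 \<or> c = 4 \<or> c = 5" using assms by auto
  then show ?thesis
    unfolding H_verts_def upt6
    by (elim disjE) (simp_all add: filter_map o_def H_size_def)
qed

lemma H_verts_length: "length (H_verts a b) = 3 * a + 3 * b"
  unfolding H_verts_def upt6 by (simp add: H_size_def)

lemma H_adj_cl: "H_adj u w \<longleftrightarrow> u \<noteq> w \<and> clC6 (fst u) (fst w)"
  by (simp add: H_adj_def clC6_def)

lemma blowup_set: "set (blowup_verts vs t) = {x. fst x \<in> set vs \<and> snd x < t}"
  by (auto simp: blowup_verts_def)

lemma blowup_distinct: "distinct vs \<Longrightarrow> distinct (blowup_verts vs t)"
  unfolding blowup_verts_def by (rule distinct_concat_pairs) auto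

lemma blowup_count:
  "length (filter (\<lambda>x. P (fst x)) (blowup_verts vs t)) = t * length (filter P vs)"
  by (induction vs) (auto simp: blowup_verts_def filter_map o_def)

lemma blowup_adj_cl: "blowup_adj H_adj x y \<longleftrightarrow> x \<noteq> y \<and> clC6 (fst (fst x)) (fst (fst y))"
  by (auto simp: blowup_adj_def H_adj_cl clC6_def)

theorem theorem2p2:
  fixes a b :: nat
  assumes "a + b \<ge> 1"
  shows "graph_lambda 3 (H_verts a b) H_adj = real (a + b) - 1
       \<and> graph_lambda 3 (H_verts a b) H_adj = real (length (H_verts a b)) / 3 - 1
       \<and> (\<lambda>t. graph_lambda 3 (blowup_verts (H_verts a b) t) (blowup_adj H_adj)
              / (3 * real (a + b) * real t)) \<longlonglongrightarrow> 1 / 3"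
proof -
  have l1: "graph_lambda 3 (H_verts a b) H_adj = real (a + b) - 1"
    by (rule lambda3_generic[where cl=fst and na=a and nb=b])
       (use assms in \<open>auto simp: H_verts_distinct H_verts_set H_verts_count H_adj_cl\<close>)
  have l2: "graph_lambda 3 (H_verts a b) H_adj = real (length (H_verts a b)) / 3 - 1"
    unfolding l1 H_verts_length by simp
  have l3: "graph_lambda 3 (blowup_verts (H_verts a b) t) (blowup_adj H_adj) = real (t*a + t*b) - 1"
    if t: "t \<ge> 1" for t
  proof (rule lambda3_generic[where cl="\<lambda>x. fst (fst x)" and na="t*a" and nb="t*b"])
    show "distinct (blowup_verts (H_verts a b) t)" by (rule blowup_distinct[OF H_verts_distinct])
    show "\<forall>v\<in>set (blowup_verts (H_verts a b) t). fst (fst v) < 6"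
      by (auto simp: blowup_set H_verts_set)
    show "\<forall>c<6. length (filter (\<lambda>v. fst (fst v) = c) (blowup_verts (H_verts a b) t)) =
        (if even c then t * a else t * b)"
    proof (intro allI impI)
      fix c :: nat assume c: "c < 6"
      show "length (filter (\<lambda>v. fst (fst v) = c) (blowup_verts (H_verts a b) t)) =
        (if even c then t * a else t * b)"
        using blowup_count[of "\<lambda>v. fst v = c" "H_verts a b" t] H_verts_count[OF c, of a b] by simp
    qed
    show "\<forall>u w. blowup_adj H_adj u w = (u \<noteq> w \<and> clC6 (fst (fst u)) (fst (fst w)))"
      by (simp add: blowup_adj_cl)
    show "1 \<le> t * a + t * b" using t assms
      by (metis add_mult_distrib2 mult_le_mono nat_mult_1)
  qed
  let ?c = "1 / (3 * real (a + b))"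
  have ev: "\<forall>\<^sub>F t in sequentially. 1/3 - ?c * inverse (real t) =
      graph_lambda 3 (blowup_verts (H_verts a b) t) (blowup_adj H_adj) / (3 * real (a + b) * real t)"
  proof (rule eventually_sequentiallyI[of 1])
    fix t :: nat assume t: "t \<ge> 1"
    have ab: "real (a + b) > 0" using assms by simp
    have tt: "real t > 0" using t by simp
    show "1/3 - ?c * inverse (real t) =
      graph_lambda 3 (blowup_verts (H_verts a b) t) (blowup_adj H_adj) / (3 * real (a + b) * real t)"
    proof -
      have gen: "\<And>s x::real. s > 0 \<Longrightarrow> x > 0 \<Longrightarrow> 1/3 - 1/(3*s) * inverse x = (s*x - 1)/(3*s*x)"
        by (simp add: field_simps)
      have e: "real (t*a + t*b) = real (a+b) * real t" by (simp add: algebra_simps)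
      show ?thesis unfolding l3[OF t] e using gen[OF ab tt] by simp
    qed
  qed
  have "(\<lambda>t. 1/3 - ?c * inverse (real t)) \<longlonglongrightarrow> 1/3 - ?c * 0"
    by (intro tendsto_intros lim_inverse_n)
  then have "(\<lambda>t. 1/3 - ?c * inverse (real t)) \<longlonglongrightarrow> 1/3" by simp
  then have l4: "(\<lambda>t. graph_lambda 3 (blowup_verts (H_verts a b) t) (blowup_adj H_adj)
              / (3 * real (a + b) * real t)) \<longlonglongrightarrow> 1 / 3"
    by (rule Lim_transform_eventually[OF _ ev])
  show ?thesis using l1 l2 l4 by blast
qed
end
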